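(* Let $(U,d)$ be an asymmetric pseudometric space, $k\ge 2$, $O\subseteq U$ an optimal solution of AMMD with optimum $R^*=\operatorname{div}(O)>0$, and $R'=\min\{d(u,v): d(u,v)\ge R^*/3,\ u,v\in U,\ u\ne v\}$. Let $0<R\le R'$ and run the clustering procedure Cluster$(U,d,R)$, producing centers $c_1,c_2,\dots$ and sets $A_1,A_2,\dots$. Then (i) $|A_t\cap O|\le 1$ for all $t$; and (ii) for any $t\ne t'$ with $|A_t\cap O|=1$ and $|A_{t'}\cap O|=1$, we have $d_{\min}(c_t,c_{t'})\ge R'\ge R^*/3$.
   Context: An asymmetric pseudometric space $(U,d)$ is a finite set $U$ with $d:U\times U\to\mathbb{R}_{\ge 0}$ such that $d(u,u)=0$ and $d(u,v)\le d(u,w)+d(w,v)$ for all $u,v,w\in U$ ($d$ need not be symmetric). For $S\subseteq U$, $\operatorname{div}(S)=\min_{u,v\in S,\,u\ne v} d(u,v)$; AMMD asks for $O\subseteq U$, $|O|=k$, maximizing $\operatorname{div}(O)$. $d_{\min}(u,v)=\min\{d(u,v),d(v,u)\}$, $d_{\max}(u,v)=\max\{d(u,v),d(v,u)\}$. Cluster$(U,d,R)$: initially all points are unmarked and $t=1$; while an unmarked point exists, choose any unmarked point $c_t$, let $A_t=\{v\in U \text{ unmarked}: d_{\max}(c_t,v)<R\}$, mark all points of $A_t$, add $c_t$ to the output set $U'$, and increment $t$. It returns $U'=\{c_1,c_2,\dots\}$. *)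

theory Defs
  imports Complex_Main
begin

definition asym_pseudometric :: "'a set \<Rightarrow> ('a \<Rightarrow> 'a \<Rightarrow> real) \<Rightarrow> bool" where
  "asym_pseudometric U d \<longleftrightarrow> finite U \<and>
     (\<forall>u\<in>U. \<forall>v\<in>U. d u v \<ge> 0) \<and>
     (\<forall>u\<in>U. d u u = 0) \<and>
     (\<forall>u\<in>U. \<forall>v\<in>U. \<forall>w\<in>U. d u v \<le> d u w + d w v)"

definition dmin :: "('a \<Rightarrow> 'a \<Rightarrow> real) \<Rightarrow> 'a \<Rightarrow> 'a \<Rightarrow> real" where
  "dmin d u v = min (d u v) (d v u)"

definition dmax :: "('a \<Rightarrow> 'a \<Rightarrow> real) \<Rightarrow> 'a \<Rightarrow> 'a \<Rightarrow> real" where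
  "dmax d u v = max (d u v) (d v u)"

definition ammd_div :: "('a \<Rightarrow> 'a \<Rightarrow> real) \<Rightarrow> 'a set \<Rightarrow> real" where
  "ammd_div d S = Min {d u v | u v. u \<in> S \<and> v \<in> S \<and> u \<noteq> v}"

definition ammd_optimal :: "'a set \<Rightarrow> ('a \<Rightarrow> 'a \<Rightarrow> real) \<Rightarrow> nat \<Rightarrow> 'a set \<Rightarrow> bool" where
  "ammd_optimal U d k Opt \<longleftrightarrow> Opt \<subseteq> U \<and> card Opt = k \<and>
     (\<forall>S. S \<subseteq> U \<and> card S = k \<longrightarrow> ammd_div d S \<le> ammd_div d Opt)"

text \<open>A (complete) run of Cluster(U,d,R) with m iterations, centers c 0, ..., c (m-1)
  and sets A 0, ..., A (m-1) (0-indexed).\<close>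
definition cluster_run :: "'a set \<Rightarrow> ('a \<Rightarrow> 'a \<Rightarrow> real) \<Rightarrow> real \<Rightarrow> nat \<Rightarrow> (nat \<Rightarrow> 'a) \<Rightarrow> (nat \<Rightarrow> 'a set) \<Rightarrow> bool" where
  "cluster_run U d R m c A \<longleftrightarrow>
     (\<forall>t<m. c t \<in> U - (\<Union>s<t. A s) \<and>
            A t = {v \<in> U - (\<Union>s<t. A s). dmax d (c t) v < R}) \<and>
     (\<Union>t<m. A t) = U"

end

theory Submission
  imports Defs
begin

theorem proposition5p2:
  fixes U :: "'a set" and d :: "'a \<Rightarrow> 'a \<Rightarrow> real" and k :: nat and Opt :: "'a set"
    and Rstar R' R :: real and m :: nat and c :: "nat \<Rightarrow> 'a" and A :: "nat \<Rightarrow> 'a set"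
  assumes "asym_pseudometric U d"
    and "k \<ge> 2"
    and "ammd_optimal U d k Opt"
    and "Rstar = ammd_div d Opt"
    and "Rstar > 0"
    and "R' = Min {d u v | u v. u \<in> U \<and> v \<in> U \<and> u \<noteq> v \<and> d u v \<ge> Rstar / 3}"
    and "0 < R" and "R \<le> R'"
    and "cluster_run U d R m c A"
  shows "(\<forall>t<m. card (A t \<inter> Opt) \<le> 1) \<and>
         (\<forall>t<m. \<forall>t'<m. t \<noteq> t' \<and> card (A t \<inter> Opt) = 1 \<and> card (A t' \<inter> Opt) = 1 \<longrightarrow>
            dmin d (c t) (c t') \<ge> R' \<and> R' \<ge> Rstar / 3)"
proof -
  have finU: "finite U" using assms(1) unfolding asym_pseudometric_def by blast
  have tri: "\<And>u v w. u \<in> U \<Longrightarrow> v \<in> U \<Longrightarrow> w \<in> U \<Longrightarrow> d u v \<le> d u w + d w v"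
    using assms(1) unfolding asym_pseudometric_def by blast
  have dz: "\<And>u. u \<in> U \<Longrightarrow> d u u = 0"
    using assms(1) unfolding asym_pseudometric_def by blast
  have OU: "Opt \<subseteq> U" and cardO: "card Opt = k" using assms(3) unfolding ammd_optimal_def by auto
  have finO: "finite Opt" using OU finU finite_subset by blast
  define S where "S = {d u v | u v. u \<in> U \<and> v \<in> U \<and> u \<noteq> v \<and> d u v \<ge> Rstar / 3}"
  have finS: "finite S"
  proof -
    have "S \<subseteq> (\<lambda>(u,v). d u v) ` (U \<times> U)" unfolding S_def by auto
    thus ?thesis using finU by (meson finite_SigmaI finite_imageI finite_subset)
  qed
  define T where "T = {d u v | u v. u \<in> Opt \<and> v \<in> Opt \<and> u \<noteq> v}"
  have finT: "finite T"
  proof -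
    have "T \<subseteq> (\<lambda>(u,v). d u v) ` (Opt \<times> Opt)" unfolding T_def by auto
    thus ?thesis using finO by (meson finite_SigmaI finite_imageI finite_subset)
  qed
  have optsep: "\<And>u v. u \<in> Opt \<Longrightarrow> v \<in> Opt \<Longrightarrow> u \<noteq> v \<Longrightarrow> Rstar \<le> d u v"
  proof -
    fix u v assume "u \<in> Opt" "v \<in> Opt" "u \<noteq> v"
    hence "d u v \<in> T" unfolding T_def by blast
    thus "Rstar \<le> d u v" using finT assms(4) unfolding ammd_div_def T_def[symmetric] by simp
  qed
  have small: "\<And>u v. u \<in> U \<Longrightarrow> v \<in> U \<Longrightarrow> d u v < R' \<Longrightarrow> d u v < Rstar / 3"
  proof -
    fix u v assume uv: "u \<in> U" "v \<in> U" "d u v < R'"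
    show "d u v < Rstar / 3"
    proof (cases "u = v")
      case True thus ?thesis using dz uv assms(5) by simp
    next
      case False
      show ?thesis
      proof (rule ccontr)
        assume "\<not> d u v < Rstar / 3"
        hence "d u v \<in> S" unfolding S_def using uv False by force
        hence "R' \<le> d u v" using finS assms(6) unfolding S_def[symmetric] by simp
        thus False using uv by simp
      qed
    qed
  qed
  have cr: "\<And>t. t < m \<Longrightarrow> c t \<in> U - (\<Union>s<t. A s) \<and> A t = {v \<in> U - (\<Union>s<t. A s). dmax d (c t) v < R}"
    using assms(9) unfolding cluster_run_def by blast
  have inA: "\<And>t v. t < m \<Longrightarrow> v \<in> A t \<Longrightarrow> v \<in> U \<and> d (c t) v < R \<and> d v (c t) < R \<and> c t \<in> U"
    using cr unfolding dmax_def by fastforce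
  have disj: "\<And>t t' v. t < t' \<Longrightarrow> t' < m \<Longrightarrow> v \<in> A t \<Longrightarrow> v \<notin> A t'"
    using cr by blast
  have part1: "\<forall>t<m. card (A t \<inter> Opt) \<le> 1"
  proof (intro allI impI)
    fix t assume tm: "t < m"
    have "\<forall>x\<in>A t \<inter> Opt. \<forall>y\<in>A t \<inter> Opt. x = y"
    proof (intro ballI, rule ccontr)
      fix x y assume x: "x \<in> A t \<inter> Opt" and y: "y \<in> A t \<inter> Opt" and ne: "x \<noteq> y"
      have a: "d x (c t) < Rstar / 3" using inA[OF tm, of x] x small assms(8) by force
      have b: "d (c t) y < Rstar / 3" using inA[OF tm, of y] y small assms(8) by force
      have "d x y \<le> d x (c t) + d (c t) y" using tri inA[OF tm, of x] inA[OF tm, of y] x y by blast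
      moreover have "Rstar \<le> d x y" using optsep x y ne by blast
      ultimately show False using a b assms(5) by linarith
    qed
    thus "card (A t \<inter> Opt) \<le> 1" using finO by (simp add: card_le_Suc0_iff_eq)
  qed
  have R'ge: "R' \<ge> Rstar / 3"
  proof -
    have "2 \<le> card Opt" using cardO assms(2) by simp
    then obtain x y where xy: "x \<in> Opt" "y \<in> Opt" "x \<noteq> y"
      using card_le_Suc0_iff_eq[OF finO] by fastforce
    have "d x y \<in> S" unfolding S_def using xy OU optsep[OF xy] assms(5) by force
    hence ne: "S \<noteq> {}" by blast
    have "\<forall>s\<in>S. Rstar / 3 \<le> s" unfolding S_def by blast
    thus ?thesis using Min_ge_iff[OF finS ne] assms(6) unfolding S_def[symmetric] by simp
  qed
  have key: "\<And>t t'. t < m \<Longrightarrow> t' < m \<Longrightarrow> t \<noteq> t' \<Longrightarrow> card (A t \<inter> Opt) = 1 \<Longrightarrow>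
     card (A t' \<inter> Opt) = 1 \<Longrightarrow> d (c t) (c t') \<ge> R'"
  proof (rule ccontr)
    fix t t' assume tm: "t < m" and tm': "t' < m" and ne: "t \<noteq> t'"
      and c1: "card (A t \<inter> Opt) = 1" and c2: "card (A t' \<inter> Opt) = 1"
      and lt: "\<not> d (c t) (c t') \<ge> R'"
    obtain x where x: "x \<in> A t \<inter> Opt" using c1 by (metis card_1_singletonE insertI1)
    obtain y where y: "y \<in> A t' \<inter> Opt" using c2 by (metis card_1_singletonE insertI1)
    have xy: "x \<noteq> y" using disj x y ne tm tm' by (metis IntD1 linorder_neqE_nat)
    have a: "d x (c t) < Rstar / 3" using inA[OF tm, of x] x small assms(8) by force
    have b: "d (c t') y < Rstar / 3" using inA[OF tm', of y] y small assms(8) by force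
    have cc: "d (c t) (c t') < Rstar / 3" using small inA[OF tm, of x] inA[OF tm', of y] x y lt by force
    have "d x y \<le> d x (c t) + d (c t) y" using tri inA[OF tm, of x] inA[OF tm', of y] x y by blast
    moreover have "d (c t) y \<le> d (c t) (c t') + d (c t') y" using tri inA[OF tm, of x] inA[OF tm', of y] x y by blast
    moreover have "Rstar \<le> d x y" using optsep x y xy by blast
    ultimately show False using a b cc assms(5) by linarith
  qed
  show ?thesis
    using part1 R'ge key unfolding dmin_def by (metis min.boundedI)
qed

end
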